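(* Let $\mathcal{R}$ be a finite valuation ring with residue field of cardinality $q$ and with uniformizer of nilpotency degree $r$ (so $|\mathcal{R}|=q^r$), and let $\mathcal{R}^*$ denote its group of units. Let $G$ be a subgroup of $\mathcal{R}^*$, let $g,h\colon G\to\mathcal{R}^*$ be arbitrary functions, and define $f\colon G\times\mathcal{R}^*\to\mathcal{R}$ by $f(x,y)=g(x)(h(x)+y)$. Put $m=\mu(g\cdot h)$, where $(g\cdot h)(x)=g(x)h(x)$. Then there is a constant $c>0$ depending only on $r$ such that for all sets $A\subset G$ and $B,C\subset\mathcal{R}^*$, \[|f(A,B)|\,|B\cdot C|\ \ge\ c\min\left\{\frac{q^r|B|}{m},\ \frac{|A||B|^2|C|}{m^2q^{2r-1}}\right\}.\]
   Context: A finite valuation ring is a finite commutative ring with identity that is local (has a unique maximal ideal) and principal (every ideal is principal); its maximal ideal is generated by a non-unit $z$ (a uniformizer), the residue field $\mathcal{R}/(z)$ has $q$ elements, and $r$ is the least integer with $z^r=0$. For a function $\varphi\colon G\to\mathcal{R}$, $\mu(\varphi)=\max_{t\in\mathcal{R}}|\{x\in G:\varphi(x)=t\}|$. Notation: $f(A,B)=\{f(x,y):x\in A,y\in B\}$ and $B\cdot C=\{bc:b\in B,c\in C\}$. *)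

theory Defs
  imports "HOL-Algebra.Algebra" "HOL-Analysis.Analysis"
begin

definition finite_valuation_ring :: "('a, 'b) ring_scheme \<Rightarrow> bool" where
  "finite_valuation_ring R \<longleftrightarrow>
     cring R \<and> finite (carrier R) \<and>
     (\<exists>!M. maximalideal M R) \<and>
     (\<forall>I. ideal I R \<longrightarrow> principalideal I R)"

definition mu :: "('a, 'b) ring_scheme \<Rightarrow> 'c set \<Rightarrow> ('c \<Rightarrow> 'a) \<Rightarrow> nat" where
  "mu R D \<phi> = Max ((\<lambda>t. card {x \<in> D. \<phi> x = t}) ` carrier R)"

end

theory Submission
  imports Defs
begin


context cring begin

lemma uniq_max:
  assumes uniq: "\<exists>!M. maximalideal M R" and "maximalideal A R" "maximalideal B R"
  shows "A = B"
proof -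
  from uniq obtain M0 where "\<forall>y. maximalideal y R \<longrightarrow> y = M0" by (rule ex1E) blast
  then have "A = M0" "B = M0" using assms(2,3) by blast+
  then show ?thesis by simp
qed

lemma nonunit_in_max:
  assumes fin: "finite (carrier R)" and uniq: "\<exists>!M. maximalideal M R"
    and MM: "maximalideal M R" and x: "x \<in> carrier R" "x \<notin> Units R"
  shows "x \<in> M"
proof -
  define S where "S = {J. ideal J R \<and> PIdl x \<subseteq> J \<and> \<one> \<notin> J}"
  have n1: "\<one> \<notin> PIdl x"
  proof
    assume "\<one> \<in> PIdl x"
    then obtain y where y: "y \<in> carrier R" "\<one> = y \<otimes> x" unfolding cgenideal_def by blast
    have e1: "y \<otimes> x = \<one>" using y(2) by simp
    have e2: "x \<otimes> y = \<one>" using e1 m_comm[OF x(1) y(1)] by simp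
    have "x \<in> Units R" unfolding Units_def using x(1) y(1) e1 e2 by blast
    with x(2) show False by simp
  qed
  have PS: "PIdl x \<in> S" unfolding S_def using cgenideal_ideal[OF x(1)] n1 by simp
  have "S \<subseteq> Pow (carrier R)"
  proof
    fix J assume "J \<in> S"
    then have "ideal J R" unfolding S_def by simp
    then have "J \<subseteq> carrier R" by (rule ideal.axioms(1)[THEN additive_subgroup.a_subset])
    then show "J \<in> Pow (carrier R)" by simp
  qed
  then have finS: "finite S" using fin finite_subset by (metis finite_Pow_iff)
  obtain J where J: "J \<in> S" and Jm: "\<And>b. b \<in> S \<Longrightarrow> J \<le> b \<Longrightarrow> J = b"
    using finite_has_maximal[OF finS] PS by blast
  have Jid: "ideal J R" and Jx: "PIdl x \<subseteq> J" and J1: "\<one> \<notin> J" using J unfolding S_def by auto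
  have "maximalideal J R"
  proof (rule maximalidealI)
    show "ideal J R" by (rule Jid)
    show "carrier R \<noteq> J" using J1 by auto
    fix J' assume J': "ideal J' R" "J \<subseteq> J'" "J' \<subseteq> carrier R"
    show "J' = J \<or> J' = carrier R"
    proof (cases "\<one> \<in> J'")
      case True then show ?thesis using ideal.one_imp_carrier[OF J'(1)] by simp
    next
      case False then have "J' \<in> S" unfolding S_def using Jx J' by auto
      then have "J = J'" using Jm J'(2) by simp
      then show ?thesis by simp
    qed
  qed
  then have "J = M" using uniq_max[OF uniq _ MM] by simp
  then show ?thesis using Jx cgenideal_self[OF x(1)] by blast
qed

lemma one_in_max_False:
  assumes "maximalideal M R" shows "\<one> \<notin> M"
proof
  assume "\<one> \<in> M"
  then have "M = carrier R" using ideal.one_imp_carrier[OF maximalideal.axioms(1)[OF assms]] by simp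
  then show False using maximalideal.I_notcarr[OF assms] by simp
qed

lemma max_unit:
  assumes fin: "finite (carrier R)" and uniq: "\<exists>!M. maximalideal M R"
    and MM: "maximalideal M R" and m: "m \<in> M"
  shows "\<one> \<oplus> m \<in> Units R"
proof (rule ccontr)
  interpret I: ideal M R using MM maximalideal.axioms(1) by blast
  have mc: "m \<in> carrier R" using m I.a_subset by blast
  assume "\<one> \<oplus> m \<notin> Units R"
  then have "\<one> \<oplus> m \<in> M" using nonunit_in_max[OF fin uniq MM] mc by auto
  then have "(\<one> \<oplus> m) \<oplus> (\<ominus> m) \<in> M" using m I.a_closed I.a_inv_closed by blast
  moreover have "(\<one> \<oplus> m) \<oplus> (\<ominus> m) = \<one>" using mc by algebra
  ultimately show False using one_in_max_False[OF MM] by simp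
qed


lemma nilpotent_max:
  assumes fin: "finite (carrier R)" and uniq: "\<exists>!M. maximalideal M R"
    and MM: "maximalideal M R" and z: "z \<in> carrier R" and M: "M = PIdl z"
  shows "\<exists>n::nat. z [^] n = \<zero>"
proof -
  interpret I: ideal M R using MM maximalideal.axioms(1) by blast
  have "\<not> inj (\<lambda>n::nat. z [^] n)"
  proof
    assume "inj (\<lambda>n::nat. z [^] n)"
    then have "infinite (range (\<lambda>n::nat. z [^] n))" using range_inj_infinite by blast
    moreover have "range (\<lambda>n::nat. z [^] n) \<subseteq> carrier R" using z by auto
    ultimately show False using fin finite_subset by blast
  qed
  then obtain a b :: nat where ab: "a \<noteq> b" "z [^] a = z [^] b" unfolding inj_def by blast
  have "\<exists>a p::nat. p \<ge> 1 \<and> z [^] a = z [^] (a + p)"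
  proof (cases "a < b")
    case True then show ?thesis using ab by (intro exI[of _ a] exI[of _ "b-a"]) auto
  next
    case False then have "b < a" using ab by simp
    then show ?thesis using ab by (intro exI[of _ b] exI[of _ "a-b"]) auto
  qed
  then obtain a p :: nat where ap: "p \<ge> 1" "z [^] a = z [^] (a + p)" by blast
  have zp: "z [^] p \<in> M"
  proof -
    obtain p' where "p = Suc p'" using ap(1) not0_implies_Suc by fastforce
    then have "z [^] p = z [^] (p - 1) \<otimes> z" by simp
    then show ?thesis using z unfolding M cgenideal_def by auto
  qed
  then have "\<ominus> (z [^] p) \<in> M" using I.a_inv_closed by blast
  then have u: "\<one> \<oplus> \<ominus> (z [^] p) \<in> Units R" using max_unit[OF fin uniq MM] by blast
  have za: "z [^] a \<in> carrier R" and zpc: "z [^] p \<in> carrier R" using z by auto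
  have "z [^] a \<otimes> (\<one> \<oplus> \<ominus> (z [^] p)) = z [^] a \<ominus> z [^] a \<otimes> z [^] p"
    using za zpc by algebra
  also have "z [^] a \<otimes> z [^] p = z [^] a" using ap(2) nat_pow_mult[OF z, of a p] by simp
  also have "z [^] a \<ominus> z [^] a = \<zero>" using za by (simp add: r_neg minus_eq)
  finally have "z [^] a \<otimes> (\<one> \<oplus> \<ominus> (z [^] p)) = \<zero>" .
  moreover have "z [^] a = (z [^] a \<otimes> (\<one> \<oplus> \<ominus> (z [^] p))) \<otimes> inv (\<one> \<oplus> \<ominus> (z [^] p))"
    using u z by (simp add: m_assoc Units_r_inv Units_closed Units_inv_closed)
  ultimately have "z [^] a = \<zero>" using u by (simp add: Units_inv_closed)
  then show ?thesis by blast
qed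

lemma kernel_count:
  assumes fin: "finite (carrier R)" and S: "ideal S R" and a: "a \<in> carrier R"
  shows "card S = card ((\<lambda>y. y \<otimes> a) ` S) * card {y \<in> S. y \<otimes> a = \<zero>}"
proof -
  interpret S: ideal S R by fact
  have finS: "finite S" using fin S.a_subset finite_subset by blast
  let ?K = "{y \<in> S. y \<otimes> a = \<zero>}"
  have "card S = (\<Sum>y\<in>S. 1::nat)" by (rule card_eq_sum)
  also have "\<dots> = (\<Sum>t\<in>(\<lambda>y. y \<otimes> a) ` S. \<Sum>y\<in>{y \<in> S. y \<otimes> a = t}. 1::nat)"
    by (rule sum.image_gen[OF finS])
  also have "\<dots> = (\<Sum>t\<in>(\<lambda>y. y \<otimes> a) ` S. card {y \<in> S. y \<otimes> a = t})" by simp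
  also have "\<dots> = (\<Sum>t\<in>(\<lambda>y. y \<otimes> a) ` S. card ?K)"
  proof (rule sum.cong[OF refl])
    fix t assume "t \<in> (\<lambda>y. y \<otimes> a) ` S"
    then obtain y0 where y0: "y0 \<in> S" "t = y0 \<otimes> a" by blast
    have y0c: "y0 \<in> carrier R" using y0 S.a_subset by blast
    have "bij_betw (\<lambda>k. y0 \<oplus> k) ?K {y \<in> S. y \<otimes> a = t}"
    proof (rule bij_betw_byWitness[where f' = "\<lambda>y. y \<ominus> y0"])
      show "\<forall>k\<in>?K. (\<lambda>k. y0 \<oplus> k) k \<ominus> y0 = k"
      proof
        fix k assume "k \<in> ?K"
        then have "k \<in> carrier R" using S.a_subset by blast
        then show "(\<lambda>k. y0 \<oplus> k) k \<ominus> y0 = k" using y0c by algebra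
      qed
      show "\<forall>y\<in>{y \<in> S. y \<otimes> a = t}. y0 \<oplus> (y \<ominus> y0) = y"
      proof
        fix k assume "k \<in> {y \<in> S. y \<otimes> a = t}"
        then have "k \<in> carrier R" using S.a_subset by blast
        then show "y0 \<oplus> (k \<ominus> y0) = k" using y0c by algebra
      qed
      show "(\<lambda>k. y0 \<oplus> k) ` ?K \<subseteq> {y \<in> S. y \<otimes> a = t}"
      proof
        fix w assume "w \<in> (\<lambda>k. y0 \<oplus> k) ` ?K"
        then obtain k where k: "k \<in> S" "k \<otimes> a = \<zero>" "w = y0 \<oplus> k" by blast
        then have kc: "k \<in> carrier R" using S.a_subset by blast
        have "w \<otimes> a = y0 \<otimes> a \<oplus> k \<otimes> a" using k(3) kc y0c a by (simp add: l_distr)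
        then have "w \<otimes> a = t" using k(2) y0 a by simp
        moreover have "w \<in> S" using k y0 S.a_closed by simp
        ultimately show "w \<in> {y \<in> S. y \<otimes> a = t}" by simp
      qed
      show "(\<lambda>y. y \<ominus> y0) ` {y \<in> S. y \<otimes> a = t} \<subseteq> ?K"
      proof
        fix w assume "w \<in> (\<lambda>y. y \<ominus> y0) ` {y \<in> S. y \<otimes> a = t}"
        then obtain k where k: "k \<in> S" "k \<otimes> a = t" "w = k \<ominus> y0" by blast
        then have kc: "k \<in> carrier R" using S.a_subset by blast
        have "w \<otimes> a = k \<otimes> a \<ominus> y0 \<otimes> a" using k(3) kc y0c a by algebra
        then have "w \<otimes> a = \<zero>" using k(2) y0 a y0c by (simp add: r_neg minus_eq)
        moreover have "w \<in> S" using k y0 S.a_closed S.a_inv_closed by (simp add: minus_eq)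
        ultimately show "w \<in> ?K" by simp
      qed
    qed
    then show "card {y \<in> S. y \<otimes> a = t} = card ?K" by (simp add: bij_betw_same_card)
  qed
  also have "\<dots> = card ((\<lambda>y. y \<otimes> a) ` S) * card ?K" by simp
  finally show ?thesis .
qed


lemma vr_structure:
  assumes fin: "finite (carrier R)" and uniq: "\<exists>!M. maximalideal M R"
    and MM: "maximalideal M R" and z: "z \<in> carrier R" and M: "M = PIdl z"
    and r: "r = (LEAST n::nat. z [^] n = \<zero>)"
  shows "r \<ge> 1 \<and> card (carrier R) = card (carrier (R Quot M)) ^ r
         \<and> card M = card (carrier (R Quot M)) ^ (r - 1)"
proof -
  interpret I: ideal M R using MM maximalideal.axioms(1) by blast
  define q where "q = card (carrier (R Quot M))"
  have qM: "q * card M = card (carrier R)"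
    using a_lagrange[OF fin I.additive_subgroup_axioms] unfolding q_def
    by (simp add: FactRing_def Coset.order_def)
  have zr: "z [^] r = \<zero>" using nilpotent_max[OF fin uniq MM z M] unfolding r by (rule LeastI_ex)
  have ne: "\<And>i. i < r \<Longrightarrow> z [^] i \<noteq> \<zero>" unfolding r by (rule not_less_Least)
  have one_ne: "\<one> \<noteq> \<zero>" using one_in_max_False[OF MM] I.additive_subgroup_axioms
    additive_subgroup.zero_closed by metis
  have r1: "r \<ge> 1"
  proof (rule ccontr)
    assume "\<not> r \<ge> 1" then have "r = 0" by simp
    then show False using zr one_ne by simp
  qed
  define I where "I i = PIdl (z [^] (i::nat))" for i
  have finM: "finite M" using fin I.a_subset finite_subset by blast
  have step: "card (I i) = q * card (I (Suc i))" if i: "i < r" for i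
  proof -
    let ?a = "z [^] i"
    have a: "?a \<in> carrier R" using z by simp
    have K: "{y \<in> carrier R. y \<otimes> ?a = \<zero>} = {y \<in> M. y \<otimes> ?a = \<zero>}"
    proof
      show "{y \<in> M. y \<otimes> ?a = \<zero>} \<subseteq> {y \<in> carrier R. y \<otimes> ?a = \<zero>}" using I.a_subset by blast
      show "{y \<in> carrier R. y \<otimes> ?a = \<zero>} \<subseteq> {y \<in> M. y \<otimes> ?a = \<zero>}"
      proof
        fix y assume "y \<in> {y \<in> carrier R. y \<otimes> ?a = \<zero>}"
        then have y: "y \<in> carrier R" "y \<otimes> ?a = \<zero>" by auto
        have "y \<in> M"
        proof (rule ccontr)
          assume "y \<notin> M"
          then have u: "y \<in> Units R" using nonunit_in_max[OF fin uniq MM y(1)] by blast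
          have "?a = inv y \<otimes> (y \<otimes> ?a)" using u a
            by (simp add: m_assoc[symmetric] Units_closed Units_inv_closed)
          then have "?a = \<zero>" using y(2) u by (simp add: Units_inv_closed)
          then show False using ne[OF i] by simp
        qed
        then show "y \<in> {y \<in> M. y \<otimes> ?a = \<zero>}" using y by simp
      qed
    qed
    have img1: "(\<lambda>y. y \<otimes> ?a) ` carrier R = I i" unfolding I_def cgenideal_def by auto
    have img2: "(\<lambda>y. y \<otimes> ?a) ` M = I (Suc i)"
    proof
      show "(\<lambda>y. y \<otimes> ?a) ` M \<subseteq> I (Suc i)"
      proof
        fix w assume "w \<in> (\<lambda>y. y \<otimes> ?a) ` M"
        then obtain x where x: "x \<in> carrier R" "w = (x \<otimes> z) \<otimes> ?a" unfolding M cgenideal_def by blast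
        have "(x \<otimes> z) \<otimes> ?a = x \<otimes> (z \<otimes> ?a)" using m_assoc[OF x(1) z a] .
        also have "\<dots> = x \<otimes> (?a \<otimes> z)" using m_comm[OF z a] by simp
        also have "\<dots> = x \<otimes> z [^] Suc i" by simp
        finally have "w = x \<otimes> z [^] Suc i" using x(2) by simp
        then show "w \<in> I (Suc i)" using x unfolding I_def cgenideal_def by blast
      qed
      show "I (Suc i) \<subseteq> (\<lambda>y. y \<otimes> ?a) ` M"
      proof
        fix w assume "w \<in> I (Suc i)"
        then obtain x where x: "x \<in> carrier R" "w = x \<otimes> z [^] Suc i" unfolding I_def cgenideal_def by blast
        have "(x \<otimes> z) \<otimes> ?a = x \<otimes> (z \<otimes> ?a)" using m_assoc[OF x(1) z a] .
        also have "\<dots> = x \<otimes> (?a \<otimes> z)" using m_comm[OF z a] by simp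
        also have "\<dots> = x \<otimes> z [^] Suc i" by simp
        finally have "w = (x \<otimes> z) \<otimes> ?a" using x(2) by simp
        moreover have "x \<otimes> z \<in> M" using x z unfolding M cgenideal_def by blast
        ultimately show "w \<in> (\<lambda>y. y \<otimes> ?a) ` M" by blast
      qed
    qed
    have c1: "card (carrier R) = card (I i) * card {y \<in> M. y \<otimes> ?a = \<zero>}"
      using kernel_count[OF fin oneideal a] img1 K by simp
    have c2: "card M = card (I (Suc i)) * card {y \<in> M. y \<otimes> ?a = \<zero>}"
      using kernel_count[OF fin I.is_ideal a] img2 by simp
    have "card {y \<in> M. y \<otimes> ?a = \<zero>} > 0"
    proof -
      have "\<zero> \<in> {y \<in> M. y \<otimes> ?a = \<zero>}" using a by simp
      moreover have "finite {y \<in> M. y \<otimes> ?a = \<zero>}" using finM by simp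
      ultimately show ?thesis using card_gt_0_iff by blast
    qed
    moreover have "card (I i) * card {y \<in> M. y \<otimes> ?a = \<zero>} = (q * card (I (Suc i))) * card {y \<in> M. y \<otimes> ?a = \<zero>}"
    proof -
      have "card (I i) * card {y \<in> M. y \<otimes> ?a = \<zero>} = card (carrier R)" using c1 by simp
      also have "\<dots> = q * card M" using qM by simp
      also have "\<dots> = (q * card (I (Suc i))) * card {y \<in> M. y \<otimes> ?a = \<zero>}" using c2 by (simp add: mult.assoc)
      finally show ?thesis .
    qed
    ultimately show ?thesis using mult_right_cancel[of "card {y \<in> M. y \<otimes> ?a = \<zero>}" "card (I i)" "q * card (I (Suc i))"] by simp
  qed
  have Ir: "card (I r) = 1"
  proof -
    have "I r = {\<zero>}" unfolding I_def cgenideal_def zr by (auto intro!: exI[of _ "\<zero>"])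
    then show ?thesis by simp
  qed
  have down: "k \<le> r \<Longrightarrow> card (I (r - k)) = q ^ k" for k
  proof (induction k)
    case 0 then show ?case using Ir by simp
  next
    case (Suc k)
    then have "r - Suc k < r" "Suc (r - Suc k) = r - k" by auto
    then show ?case using step[of "r - Suc k"] Suc by simp
  qed
  have I0: "I 0 = carrier R"
  proof
    show "I 0 \<subseteq> carrier R" unfolding I_def cgenideal_def by auto
    show "carrier R \<subseteq> I 0"
    proof
      fix x assume x: "x \<in> carrier R"
      then have "x = x \<otimes> z [^] (0::nat)" by simp
      then show "x \<in> I 0" unfolding I_def cgenideal_def using x by blast
    qed
  qed
  have I1: "I 1 = M" unfolding I_def M using z by simp
  have "card (carrier R) = q ^ r" using down[of r] I0 by simp
  moreover have "card M = q ^ (r - 1)" using down[of "r - 1"] I1 r1 by simp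
  ultimately show ?thesis using r1 unfolding q_def by simp
qed

end



context cring begin

lemma card_filter_sum:
  assumes "finite YY"
  shows "card {s \<in> YY. P s} = (\<Sum>s\<in>YY. if P s then 1 else 0 :: nat)"
  using sum.inter_filter[OF assms, of "\<lambda>_. 1::nat" P] by simp

lemma line_sum1:
  assumes fin: "finite (carrier R)" and XX: "XX \<subseteq> carrier R" and YY: "YY \<subseteq> carrier R"
  shows "card (carrier R) * card XX * card YY
     \<le> (\<Sum>l\<in>carrier R \<times> carrier R. card {s \<in> YY. snd l \<oplus> fst l \<otimes> s \<in> XX})"
proof -
  have finY: "finite YY" using fin YY finite_subset by blast
  have finX: "finite XX" using fin XX finite_subset by blast
  have finRR: "finite (carrier R \<times> carrier R)" using fin by simp
  have "(\<Sum>l\<in>carrier R \<times> carrier R. card {s \<in> YY. snd l \<oplus> fst l \<otimes> s \<in> XX})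
      = (\<Sum>l\<in>carrier R \<times> carrier R. \<Sum>s\<in>YY. if snd l \<oplus> fst l \<otimes> s \<in> XX then 1 else 0)"
    using card_filter_sum[OF finY] by simp
  also have "\<dots> = (\<Sum>s\<in>YY. \<Sum>l\<in>carrier R \<times> carrier R. if snd l \<oplus> fst l \<otimes> s \<in> XX then 1 else 0)"
    by (rule sum.swap)
  also have "\<dots> = (\<Sum>s\<in>YY. card {l \<in> carrier R \<times> carrier R. snd l \<oplus> fst l \<otimes> s \<in> XX})"
    using card_filter_sum[OF finRR] by simp
  finally have eq: "(\<Sum>l\<in>carrier R \<times> carrier R. card {s \<in> YY. snd l \<oplus> fst l \<otimes> s \<in> XX})
      = (\<Sum>s\<in>YY. card {l \<in> carrier R \<times> carrier R. snd l \<oplus> fst l \<otimes> s \<in> XX})" .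
  have each: "card (carrier R) * card XX \<le> card {l \<in> carrier R \<times> carrier R. snd l \<oplus> fst l \<otimes> s \<in> XX}"
    if s: "s \<in> YY" for s
  proof -
    have sc: "s \<in> carrier R" using s YY by blast
    have "card (carrier R \<times> XX) \<le> card {l \<in> carrier R \<times> carrier R. snd l \<oplus> fst l \<otimes> s \<in> XX}"
    proof (rule card_inj_on_le[where f = "\<lambda>(a, x). (a, x \<ominus> a \<otimes> s)"])
      show "inj_on (\<lambda>(a, x). (a, x \<ominus> a \<otimes> s)) (carrier R \<times> XX)"
      proof (rule inj_onI)
        fix p p' assume hp: "p \<in> carrier R \<times> XX" "p' \<in> carrier R \<times> XX"
          "(\<lambda>(a, x). (a, x \<ominus> a \<otimes> s)) p = (\<lambda>(a, x). (a, x \<ominus> a \<otimes> s)) p'"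
        obtain a x a' x' where pp: "p = (a, x)" "p' = (a', x')" by (cases p, cases p')
        have h: "a \<in> carrier R" "x \<in> carrier R" "a' \<in> carrier R" "x' \<in> carrier R"
          using hp pp XX by auto
        have e: "a = a'" "x \<ominus> a \<otimes> s = x' \<ominus> a' \<otimes> s" using hp(3) pp by auto
        have "x = (x \<ominus> a \<otimes> s) \<oplus> a \<otimes> s" using h sc by algebra
        also have "\<dots> = (x' \<ominus> a' \<otimes> s) \<oplus> a' \<otimes> s" using e by simp
        also have "\<dots> = x'" using h sc by algebra
        finally show "p = p'" using pp e(1) by simp
      qed
      show "(\<lambda>(a, x). (a, x \<ominus> a \<otimes> s)) ` (carrier R \<times> XX)
          \<subseteq> {l \<in> carrier R \<times> carrier R. snd l \<oplus> fst l \<otimes> s \<in> XX}"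
      proof
        fix w assume "w \<in> (\<lambda>(a, x). (a, x \<ominus> a \<otimes> s)) ` (carrier R \<times> XX)"
        then obtain a x where h: "a \<in> carrier R" "x \<in> XX" and w: "w = (a, x \<ominus> a \<otimes> s)" by auto
        have xc: "x \<in> carrier R" using h XX by auto
        have "x \<ominus> a \<otimes> s \<oplus> a \<otimes> s = x" using xc h(1) sc by algebra
        then show "w \<in> {l \<in> carrier R \<times> carrier R. snd l \<oplus> fst l \<otimes> s \<in> XX}"
          using w h xc sc by simp
      qed
    qed (use fin in simp)
    then show ?thesis by (simp add: card_cartesian_product)
  qed
  have "card (carrier R) * card XX * card YY = (\<Sum>s\<in>YY. card (carrier R) * card XX)" by simp
  also have "\<dots> \<le> (\<Sum>s\<in>YY. card {l \<in> carrier R \<times> carrier R. snd l \<oplus> fst l \<otimes> s \<in> XX})"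
    by (rule sum_mono) (use each in blast)
  finally show ?thesis using eq by simp
qed

lemma line_sum2:
  assumes fin: "finite (carrier R)" and XX: "XX \<subseteq> carrier R" and YY: "YY \<subseteq> carrier R"
    and MR: "M \<subseteq> carrier R" and nu: "\<And>x. x \<in> carrier R \<Longrightarrow> x \<notin> Units R \<Longrightarrow> x \<in> M"
  shows "(\<Sum>l\<in>carrier R \<times> carrier R. (card {s \<in> YY. snd l \<oplus> fst l \<otimes> s \<in> XX})^2)
     \<le> card XX ^ 2 * card YY ^ 2 + card YY * card M * card (carrier R) * card XX"
proof -
  have finY: "finite YY" using fin YY finite_subset by blast
  have finX: "finite XX" using fin XX finite_subset by blast
  have finM: "finite M" using fin MR finite_subset by blast
  have finRR: "finite (carrier R \<times> carrier R)" using fin by simp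
  define P where "P l s \<longleftrightarrow> snd l \<oplus> fst l \<otimes> s \<in> XX" for l s
  have sq: "(card {s \<in> YY. P l s})^2 = (\<Sum>s\<in>YY. \<Sum>s'\<in>YY. if P l s \<and> P l s' then 1 else 0)" for l
    unfolding card_filter_sum[OF finY] power2_eq_square sum_product
    by (intro sum.cong refl) auto
  have "(\<Sum>l\<in>carrier R \<times> carrier R. (card {s \<in> YY. P l s})^2)
      = (\<Sum>l\<in>carrier R \<times> carrier R. \<Sum>s\<in>YY. \<Sum>s'\<in>YY. if P l s \<and> P l s' then 1 else 0)"
    using sq by simp
  also have "\<dots> = (\<Sum>s\<in>YY. \<Sum>l\<in>carrier R \<times> carrier R. \<Sum>s'\<in>YY. if P l s \<and> P l s' then 1 else 0)"
    by (rule sum.swap)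
  also have "\<dots> = (\<Sum>s\<in>YY. \<Sum>s'\<in>YY. \<Sum>l\<in>carrier R \<times> carrier R. if P l s \<and> P l s' then 1 else 0)"
    by (intro sum.cong refl sum.swap)
  also have "\<dots> = (\<Sum>s\<in>YY. \<Sum>s'\<in>YY. card {l \<in> carrier R \<times> carrier R. P l s \<and> P l s'})"
    using card_filter_sum[OF finRR] by simp
  finally have eq: "(\<Sum>l\<in>carrier R \<times> carrier R. (card {s \<in> YY. P l s})^2)
      = (\<Sum>s\<in>YY. \<Sum>s'\<in>YY. card {l \<in> carrier R \<times> carrier R. P l s \<and> P l s'})" .
  have pair: "card {l \<in> carrier R \<times> carrier R. P l s \<and> P l s'}
      \<le> card XX ^ 2 + (if s' \<ominus> s \<in> Units R then 0 else card (carrier R) * card XX)"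
    if s: "s \<in> YY" "s' \<in> YY" for s s'
  proof -
    have sc: "s \<in> carrier R" "s' \<in> carrier R" using s YY by auto
    show ?thesis
    proof (cases "s' \<ominus> s \<in> Units R")
      case True
      have "card {l \<in> carrier R \<times> carrier R. P l s \<and> P l s'} \<le> card (XX \<times> XX)"
      proof (rule card_inj_on_le[where f = "\<lambda>(a, b). (b \<oplus> a \<otimes> s, b \<oplus> a \<otimes> s')"])
        show "inj_on (\<lambda>(a, b). (b \<oplus> a \<otimes> s, b \<oplus> a \<otimes> s')) {l \<in> carrier R \<times> carrier R. P l s \<and> P l s'}"
        proof (rule inj_onI, clarify)
          fix a b a' b' assume h: "a \<in> carrier R" "b \<in> carrier R" "a' \<in> carrier R" "b' \<in> carrier R"
            "b \<oplus> a \<otimes> s = b' \<oplus> a' \<otimes> s" "b \<oplus> a \<otimes> s' = b' \<oplus> a' \<otimes> s'"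
          have "a \<otimes> (s' \<ominus> s) = (b \<oplus> a \<otimes> s') \<ominus> (b \<oplus> a \<otimes> s)" using h(1-4) sc by algebra
          also have "\<dots> = (b' \<oplus> a' \<otimes> s') \<ominus> (b' \<oplus> a' \<otimes> s)" by (simp only: h(5,6))
          also have "\<dots> = a' \<otimes> (s' \<ominus> s)" using h(1-4) sc by algebra
          finally have e: "a \<otimes> (s' \<ominus> s) = a' \<otimes> (s' \<ominus> s)" .
          have "a = (a \<otimes> (s' \<ominus> s)) \<otimes> inv (s' \<ominus> s)" "a' = (a' \<otimes> (s' \<ominus> s)) \<otimes> inv (s' \<ominus> s)"
            using True h by (simp_all add: m_assoc Units_r_inv Units_closed Units_inv_closed)
          then have aa: "a = a'" using e by simp
          have "b = (b \<oplus> a \<otimes> s) \<ominus> a \<otimes> s" "b' = (b' \<oplus> a' \<otimes> s) \<ominus> a' \<otimes> s" using h(1-4) sc by algebra+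
          then have "b = b'" using aa h(5) by simp
          then show "a = a' \<and> b = b'" using aa by simp
        qed
        show "(\<lambda>(a, b). (b \<oplus> a \<otimes> s, b \<oplus> a \<otimes> s')) ` {l \<in> carrier R \<times> carrier R. P l s \<and> P l s'} \<subseteq> XX \<times> XX"
          unfolding P_def by auto
      qed (use finX in simp)
      then show ?thesis using True by (simp add: power2_eq_square card_cartesian_product)
    next
      case False
      have "card {l \<in> carrier R \<times> carrier R. P l s \<and> P l s'} \<le> card (carrier R \<times> XX)"
      proof (rule card_inj_on_le[where f = "\<lambda>(a, b). (a, b \<oplus> a \<otimes> s)"])
        show "inj_on (\<lambda>(a, b). (a, b \<oplus> a \<otimes> s)) {l \<in> carrier R \<times> carrier R. P l s \<and> P l s'}"
        proof (rule inj_onI)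
          fix p p' assume hp: "p \<in> {l \<in> carrier R \<times> carrier R. P l s \<and> P l s'}"
            "p' \<in> {l \<in> carrier R \<times> carrier R. P l s \<and> P l s'}"
            "(\<lambda>(a, b). (a, b \<oplus> a \<otimes> s)) p = (\<lambda>(a, b). (a, b \<oplus> a \<otimes> s)) p'"
          obtain a x a' x' where pp: "p = (a, x)" "p' = (a', x')" by (cases p, cases p')
          have h: "a \<in> carrier R" "x \<in> carrier R" "a' \<in> carrier R" "x' \<in> carrier R"
            using hp pp by auto
          have e: "a = a'" "x \<oplus> a \<otimes> s = x' \<oplus> a' \<otimes> s" using hp(3) pp by auto
          have "x = (x \<oplus> a \<otimes> s) \<ominus> a \<otimes> s" using h sc by algebra
          also have "\<dots> = (x' \<oplus> a' \<otimes> s) \<ominus> a' \<otimes> s" using e by simp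
          also have "\<dots> = x'" using h sc by algebra
          finally show "p = p'" using pp e(1) by simp
        qed
        show "(\<lambda>(a, b). (a, b \<oplus> a \<otimes> s)) ` {l \<in> carrier R \<times> carrier R. P l s \<and> P l s'} \<subseteq> carrier R \<times> XX"
          unfolding P_def by auto
      qed (use fin finX in simp)
      then show ?thesis using False by (simp add: card_cartesian_product)
    qed
  qed
  have nonunits: "card {s' \<in> YY. s' \<ominus> s \<notin> Units R} \<le> card M" if s: "s \<in> YY" for s
  proof (rule card_inj_on_le[where f = "\<lambda>s'. s' \<ominus> s"])
    have sc: "s \<in> carrier R" using s YY by auto
    show "inj_on (\<lambda>s'. s' \<ominus> s) {s' \<in> YY. s' \<ominus> s \<notin> Units R}"
    proof (rule inj_onI)
      fix x y assume h: "x \<in> {s' \<in> YY. s' \<ominus> s \<notin> Units R}" "y \<in> {s' \<in> YY. s' \<ominus> s \<notin> Units R}"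
        "x \<ominus> s = y \<ominus> s"
      have xy: "x \<in> carrier R" "y \<in> carrier R" using h YY by auto
      have "x = (x \<ominus> s) \<oplus> s" "y = (y \<ominus> s) \<oplus> s" using xy sc by algebra+
      then show "x = y" using h(3) by simp
    qed
    show "(\<lambda>s'. s' \<ominus> s) ` {s' \<in> YY. s' \<ominus> s \<notin> Units R} \<subseteq> M"
      using nu YY sc by auto
  qed (use finM in simp)
  have inner: "(\<Sum>s'\<in>YY. card {l \<in> carrier R \<times> carrier R. P l s \<and> P l s'})
      \<le> card YY * card XX ^ 2 + card M * card (carrier R) * card XX" if s: "s \<in> YY" for s
  proof -
    have "(\<Sum>s'\<in>YY. card {l \<in> carrier R \<times> carrier R. P l s \<and> P l s'})
        \<le> (\<Sum>s'\<in>YY. card XX ^ 2 + (if s' \<ominus> s \<in> Units R then 0 else card (carrier R) * card XX))"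
      by (rule sum_mono) (use pair s in blast)
    also have "\<dots> = card YY * card XX ^ 2 + (\<Sum>s'\<in>YY. if s' \<ominus> s \<notin> Units R then card (carrier R) * card XX else 0)"
      by (simp add: sum.distrib if_not_P) (intro sum.cong refl, auto)
    also have "(\<Sum>s'\<in>YY. if s' \<ominus> s \<notin> Units R then card (carrier R) * card XX else 0)
        = card {s' \<in> YY. s' \<ominus> s \<notin> Units R} * (card (carrier R) * card XX)"
      using sum.inter_filter[OF finY, of "\<lambda>_. card (carrier R) * card XX" "\<lambda>s'. s' \<ominus> s \<notin> Units R"]
      by simp
    also have "\<dots> \<le> card M * (card (carrier R) * card XX)"
      using nonunits[OF s] by (rule mult_right_mono) simp
    finally show ?thesis by (simp add: mult.assoc)
  qed
  have "(\<Sum>s\<in>YY. \<Sum>s'\<in>YY. card {l \<in> carrier R \<times> carrier R. P l s \<and> P l s'})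
      \<le> (\<Sum>s\<in>YY. card YY * card XX ^ 2 + card M * card (carrier R) * card XX)"
    by (rule sum_mono) (use inner in blast)
  also have "\<dots> = card XX ^ 2 * card YY ^ 2 + card YY * card M * card (carrier R) * card XX"
    by (simp add: power2_eq_square algebra_simps)
  finally show ?thesis using eq unfolding P_def by simp
qed

end



lemma fiber_sum_le:
  fixes F :: "'l \<Rightarrow> real" and L :: "'p \<Rightarrow> 'l"
  assumes P: "finite P" and U: "finite U" and LU: "L ` P \<subseteq> U"
    and fib: "\<And>l. card {p \<in> P. L p = l} \<le> m" and F: "\<And>l. F l \<ge> 0"
  shows "(\<Sum>p\<in>P. F (L p)) \<le> real m * (\<Sum>l\<in>U. F l)"
proof -
  have "(\<Sum>p\<in>P. F (L p)) = (\<Sum>l\<in>L ` P. \<Sum>p\<in>{p \<in> P. L p = l}. F (L p))"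
    by (rule sum.image_gen[OF P])
  also have "\<dots> = (\<Sum>l\<in>L ` P. real (card {p \<in> P. L p = l}) * F l)"
    by (intro sum.cong refl) simp
  also have "\<dots> \<le> (\<Sum>l\<in>L ` P. real m * F l)"
    by (intro sum_mono mult_right_mono) (use fib F in auto)
  also have "\<dots> \<le> (\<Sum>l\<in>U. real m * F l)"
    by (rule sum_mono2[OF U LU]) (use F in simp)
  also have "\<dots> = real m * (\<Sum>l\<in>U. F l)" by (simp add: sum_distrib_left)
  finally show ?thesis .
qed

lemma incidence_real:
  fixes n :: "'l \<Rightarrow> real" and L :: "'p \<Rightarrow> 'l"
  assumes P: "finite P" and U: "finite U" and LU: "L ` P \<subseteq> U"
    and fib: "\<And>l. card {p \<in> P. L p = l} \<le> m"
    and nb: "\<And>p. p \<in> P \<Longrightarrow> n (L p) \<ge> b"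
    and Rn: "Rn > 0" and cU: "real (card U) = Rn ^ 2"
    and Z0: "Z \<ge> 0" and s1: "(\<Sum>l\<in>U. n l) \<ge> Rn * Z" and s2: "(\<Sum>l\<in>U. (n l)^2) \<le> Z^2 + W"
  shows "real (card P) * b \<le> 2 * real (card P) * (Z / Rn) \<or>
         (real (card P) * b)^2 \<le> 4 * real (card P) * real m * W"
proof (cases "real (card P) * b \<le> 2 * real (card P) * (Z / Rn)")
  case True then show ?thesis by simp
next
  case False
  define mu where "mu = Z / Rn"
  define D where "D = (\<Sum>p\<in>P. n (L p) - mu)"
  have "real (card P) * b \<le> (\<Sum>p\<in>P. n (L p))"
    using sum_mono[of P "\<lambda>_. b" "\<lambda>p. n (L p)"] nb by simp
  also have "\<dots> = real (card P) * mu + D" unfolding D_def by (simp add: sum_subtractf)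
  finally have bD: "real (card P) * b \<le> real (card P) * mu + D" .
  have Dpos: "D \<ge> real (card P) * b / 2" using bD False unfolding mu_def by linarith
  have mu0: "mu \<ge> 0" unfolding mu_def using Rn Z0 by simp
  have c1: "D^2 \<le> (\<Sum>p\<in>P. (n (L p) - mu)^2) * card P"
    unfolding D_def by (rule sum_squared_le_sum_of_squares)
  have c2: "(\<Sum>p\<in>P. (n (L p) - mu)^2) \<le> real m * (\<Sum>l\<in>U. (n l - mu)^2)"
    by (rule fiber_sum_le[OF P U LU fib]) simp
  have c3: "(\<Sum>l\<in>U. (n l - mu)^2) = (\<Sum>l\<in>U. (n l)^2) - 2 * mu * (\<Sum>l\<in>U. n l) + mu^2 * card U"
  proof -
    have "(\<Sum>l\<in>U. (n l - mu)^2) = (\<Sum>l\<in>U. (n l)^2 - 2 * mu * n l + mu^2)"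
      by (intro sum.cong refl) (simp add: power2_diff algebra_simps)
    also have "\<dots> = (\<Sum>l\<in>U. (n l)^2) - (\<Sum>l\<in>U. 2 * mu * n l) + (\<Sum>l\<in>U. mu^2)"
      by (simp add: sum.distrib sum_subtractf)
    also have "(\<Sum>l\<in>U. 2 * mu * n l) = 2 * mu * (\<Sum>l\<in>U. n l)" by (simp add: sum_distrib_left)
    finally show ?thesis by simp
  qed
  have c4: "2 * mu * (\<Sum>l\<in>U. n l) \<ge> 2 * mu * (Rn * Z)"
    using mult_left_mono[OF s1, of "2*mu"] mu0 by simp
  have c5: "mu^2 * card U = Z^2" unfolding mu_def cU using Rn by (simp add: field_simps power2_eq_square)
  have c6: "2 * mu * (Rn * Z) = 2 * Z^2" unfolding mu_def using Rn by (simp add: field_simps power2_eq_square)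
  have c7: "(\<Sum>l\<in>U. (n l - mu)^2) \<le> W" using c3 c4 c5 c6 s2 by linarith
  have D2: "D^2 \<le> real m * W * card P"
  proof -
    have "(\<Sum>p\<in>P. (n (L p) - mu)^2) \<le> real m * W"
      using c2 c7 mult_left_mono[OF c7, of "real m"] by linarith
    then have "(\<Sum>p\<in>P. (n (L p) - mu)^2) * card P \<le> real m * W * card P"
      by (rule mult_right_mono) simp
    then show ?thesis using c1 by linarith
  qed
  have nn: "2 * real (card P) * (Z / Rn) \<ge> 0" using Z0 Rn by simp
  have pb: "0 \<le> real (card P) * b / 2" using nn False by linarith
  have "(real (card P) * b / 2)^2 \<le> D^2"
    using Dpos pb by (intro power_mono) auto
  then show ?thesis using D2 by (simp add: power2_eq_square field_simps)
qed




lemma div_le_self_real: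
  fixes x m :: real assumes "0 \<le> x" "1 \<le> m" shows "x / m \<le> x"
proof -
  have "x * 1 \<le> x * m" using assms by (intro mult_left_mono) auto
  then show ?thesis using assms by (simp add: divide_le_eq)
qed

lemma final_arith:
  fixes Z Rn Mn m a cc b :: real
  assumes Rn: "Rn > 0" and Mn: "Mn > 0" and m: "m \<ge> 1" and Z: "Z \<ge> 0"
    and a: "a \<ge> 0" and cc: "cc \<ge> 0" and b: "b \<ge> 0"
    and disj: "(a * cc) * b \<le> 2 * (a * cc) * (Z / Rn) \<or> ((a * cc) * b)^2 \<le> 4 * (a * cc) * m * (Mn * Rn * Z)"
  shows "1/4 * min (Rn * b / m) (a * b^2 * cc / (m^2 * (Mn * Rn))) \<le> Z"
proof (cases "a * cc = 0")
  case True
  then have "a * b^2 * cc / (m^2 * (Mn * Rn)) = 0" by (auto simp: mult.commute mult.left_commute)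
  then have "min (Rn * b / m) (a * b^2 * cc / (m^2 * (Mn * Rn))) \<le> 0"
    using min.cobounded2[of "Rn * b / m" "a * b^2 * cc / (m^2 * (Mn * Rn))"] by linarith
  moreover have "\<And>Q. Q \<le> 0 \<Longrightarrow> 1/4 * Q \<le> Z" using Z by linarith
  ultimately show ?thesis by blast
next
  case False
  then have P: "a * cc > 0" using a cc by (simp add: less_le)
  show ?thesis using disj
  proof
    assume h: "(a * cc) * b \<le> 2 * (a * cc) * (Z / Rn)"
    have eq: "2 * (a * cc) * (Z / Rn) = (a * cc) * (2 * (Z / Rn))" by (simp add: algebra_simps)
    have "(a * cc) * b \<le> (a * cc) * (2 * (Z / Rn))" unfolding eq[symmetric] by (rule h)
    then have "b \<le> 2 * (Z / Rn)" using mult_le_cancel_left_pos[OF P] by blast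
    then have "Rn * b \<le> 2 * Z" using Rn by (simp add: field_simps)
    moreover have "Rn * b / m \<le> Rn * b" using div_le_self_real[of "Rn * b" m] m Rn b by simp
    ultimately have "Rn * b / m \<le> 2 * Z" by linarith
    then have "min (Rn * b / m) (a * b^2 * cc / (m^2 * (Mn * Rn))) \<le> 2 * Z" by linarith
    moreover have "\<And>Q. Q \<le> 2 * Z \<Longrightarrow> 1/4 * Q \<le> Z" using Z by linarith
    ultimately show ?thesis by blast
  next
    assume h: "((a * cc) * b)^2 \<le> 4 * (a * cc) * m * (Mn * Rn * Z)"
    have "(a * cc) * ((a * cc) * b^2) \<le> (a * cc) * (4 * m * (Mn * Rn * Z))"
      using h by (simp add: power2_eq_square algebra_simps)
    then have h2: "a * cc * b^2 \<le> 4 * m * (Mn * Rn * Z)" using mult_le_cancel_left_pos[OF P] by blast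
    have mp: "m^2 * (Mn * Rn) > 0" using m Mn Rn by simp
    have "a * b^2 * cc / (m^2 * (Mn * Rn)) \<le> 4 * m * (Mn * Rn * Z) / (m^2 * (Mn * Rn))"
      using h2 mp by (intro divide_right_mono) (auto simp: mult.commute mult.left_commute)
    also have "\<dots> = 4 * Z / m" using m Mn Rn by (simp add: field_simps power2_eq_square)
    also have "\<dots> \<le> 4 * Z" using div_le_self_real[of "4 * Z" m] m Z by simp
    finally have "min (Rn * b / m) (a * b^2 * cc / (m^2 * (Mn * Rn))) \<le> 4 * Z" by linarith
    moreover have "\<And>Q. Q \<le> 4 * Z \<Longrightarrow> 1/4 * Q \<le> Z" by linarith
    ultimately show ?thesis by blast
  qed
qed




context cring begin

lemma main_bound:
  assumes fin: "finite (carrier R)" and uniq: "\<exists>!M. maximalideal M R"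
    and MM: "maximalideal M R" and z: "z \<in> carrier R" and Mz: "M = PIdl z"
    and q: "q = card (carrier (R Quot M))" and r: "r = (LEAST n::nat. z [^] n = \<zero>)"
    and G: "subgroup G (units_of R)"
    and g: "\<forall>x\<in>G. g x \<in> Units R" and h: "\<forall>x\<in>G. h x \<in> Units R"
    and A: "A \<subseteq> G" and B: "B \<subseteq> Units R" and C: "C \<subseteq> Units R"
  shows "real (card {g x \<otimes> (h x \<oplus> y) | x y. x \<in> A \<and> y \<in> B}) *
         real (card {b \<otimes> c' | b c'. b \<in> B \<and> c' \<in> C}) \<ge>
         1/4 * min (real q ^ r * real (card B) / real (mu R G (\<lambda>x. g x \<otimes> h x)))
           (real (card A) * real (card B) ^ 2 * real (card C) /
              (real (mu R G (\<lambda>x. g x \<otimes> h x)) ^ 2 * real q ^ (2 * r - 1)))"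
proof -
  define XX where "XX = {g x \<otimes> (h x \<oplus> y) | x y. x \<in> A \<and> y \<in> B}"
  define YY where "YY = {b \<otimes> c' | b c'. b \<in> B \<and> c' \<in> C}"
  define m where "m = mu R G (\<lambda>x. g x \<otimes> h x)"
  have vs: "r \<ge> 1 \<and> card (carrier R) = q ^ r \<and> card M = q ^ (r - 1)"
    using vr_structure[OF fin uniq MM z Mz r] unfolding q .
  have I: "ideal M R" using MM maximalideal.axioms(1) by blast
  have MR: "M \<subseteq> carrier R" using I ideal.axioms(1) additive_subgroup.a_subset by blast
  have nu: "\<And>x. x \<in> carrier R \<Longrightarrow> x \<notin> Units R \<Longrightarrow> x \<in> M"
    using nonunit_in_max[OF fin uniq MM] by blast
  have GU: "G \<subseteq> Units R" using subgroup.subset[OF G] units_of_carrier by metis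
  have Gc: "G \<subseteq> carrier R" using GU Units_closed by blast
  have G1: "\<one> \<in> G" using subgroup.one_closed[OF G] units_of_one by metis
  have finG: "finite G" using fin Gc finite_subset by blast
  have Bc: "B \<subseteq> carrier R" and Cc: "C \<subseteq> carrier R" using B C Units_closed by blast+
  have gc: "\<And>x. x \<in> G \<Longrightarrow> g x \<in> carrier R" and hc: "\<And>x. x \<in> G \<Longrightarrow> h x \<in> carrier R"
    using g h Units_closed by blast+
  have XXc: "XX \<subseteq> carrier R"
  proof
    fix w assume "w \<in> XX"
    then obtain x y where xy: "x \<in> A" "y \<in> B" "w = g x \<otimes> (h x \<oplus> y)" unfolding XX_def by blast
    have "g x \<in> carrier R" "h x \<in> carrier R" "y \<in> carrier R" using xy A gc hc Bc by auto
    then show "w \<in> carrier R" using xy(3) by simp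
  qed
  have YYc: "YY \<subseteq> carrier R"
  proof
    fix w assume "w \<in> YY"
    then obtain b c where bc: "b \<in> B" "c \<in> C" "w = b \<otimes> c" unfolding YY_def by blast
    have "b \<in> carrier R" "c \<in> carrier R" using bc Bc Cc by auto
    then show "w \<in> carrier R" using bc(3) by simp
  qed
  define FB where "FB t = card {x \<in> G. g x \<otimes> h x = t}" for t
  have m_eq: "m = Max (FB ` carrier R)" unfolding m_def mu_def FB_def by simp
  have FBm: "FB t \<le> m" for t
  proof (cases "t \<in> carrier R")
    case True then show ?thesis unfolding m_eq using fin by (intro Max_ge) auto
  next
    case False
    then have e: "{x \<in> G. g x \<otimes> h x = t} = {}" using gc hc by auto
    show ?thesis unfolding FB_def e by simp
  qed
  have m1: "m \<ge> 1"
  proof -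
    have "\<one> \<in> {x \<in> G. g x \<otimes> h x = g \<one> \<otimes> h \<one>}" using G1 by simp
    moreover have "finite {x \<in> G. g x \<otimes> h x = g \<one> \<otimes> h \<one>}" using finG by simp
    ultimately have "card {x \<in> G. g x \<otimes> h x = g \<one> \<otimes> h \<one>} > 0" using card_gt_0_iff by blast
    then have "FB (g \<one> \<otimes> h \<one>) \<ge> 1" unfolding FB_def by simp
    then show ?thesis using FBm[of "g \<one> \<otimes> h \<one>"] by linarith
  qed
  define P where "P = A \<times> C"
  define L where "L p = (g (fst p) \<otimes> inv (snd p), g (fst p) \<otimes> h (fst p))" for p
  define U where "U = carrier R \<times> carrier R"
  define n where "n l = real (card {s \<in> YY. snd l \<oplus> fst l \<otimes> s \<in> XX})" for l
  have finA: "finite A" and finC: "finite C" using finG A fin Cc finite_subset by blast+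
  have finP: "finite P" unfolding P_def using finA finC by simp
  have finU: "finite U" unfolding U_def using fin by simp
  have Ci: "\<And>c. c \<in> C \<Longrightarrow> inv c \<in> carrier R" using C Units_inv_closed Units_closed by blast
  have LU: "L ` P \<subseteq> U" unfolding L_def P_def U_def using A Ci gc hc by auto
  have fib: "card {p \<in> P. L p = l} \<le> m" for l
  proof -
    have "card {p \<in> P. L p = l} \<le> card {x \<in> G. g x \<otimes> h x = snd l}"
    proof (rule card_inj_on_le[where f = fst])
      show "inj_on fst {p \<in> P. L p = l}"
      proof (rule inj_onI)
        fix p p' assume hp: "p \<in> {p \<in> P. L p = l}" "p' \<in> {p \<in> P. L p = l}" "fst p = fst p'"
        obtain a c a' c' where pp: "p = (a, c)" "p' = (a', c')" by (cases p, cases p')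
        have ac: "a \<in> G" "c \<in> Units R" "c' \<in> Units R" "a' = a" using hp pp A C unfolding P_def by auto
        have "g a \<otimes> inv c = g a \<otimes> inv c'" using hp pp ac unfolding L_def by auto
        then have "inv c = inv c'" using g ac by simp
        then have "inv (inv c) = inv (inv c')" by simp
        then have "c = c'" using ac by simp
        then show "p = p'" using pp ac by simp
      qed
      show "fst ` {p \<in> P. L p = l} \<subseteq> {x \<in> G. g x \<otimes> h x = snd l}"
        unfolding P_def L_def using A by auto
    qed (use finG in simp)
    also have "\<dots> \<le> m" using FBm[of "snd l"] unfolding FB_def .
    finally show ?thesis .
  qed
  have nb: "n (L p) \<ge> real (card B)" if p: "p \<in> P" for p
  proof -
    obtain a c where pp: "p = (a, c)" by (cases p)
    have a: "a \<in> G" and c: "c \<in> Units R" using p pp A C unfolding P_def by auto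
    have cc: "c \<in> carrier R" "inv c \<in> carrier R" using c by auto
    have "card B \<le> card {s \<in> YY. snd (L p) \<oplus> fst (L p) \<otimes> s \<in> XX}"
    proof (rule card_inj_on_le[where f = "\<lambda>b. b \<otimes> c"])
      show "inj_on (\<lambda>b. b \<otimes> c) B"
      proof (rule inj_onI)
        fix b b' assume hb: "b \<in> B" "b' \<in> B" "b \<otimes> c = b' \<otimes> c"
        have bb: "b \<in> carrier R" "b' \<in> carrier R" using hb Bc by auto
        have "c \<otimes> b = b \<otimes> c" "c \<otimes> b' = b' \<otimes> c" using m_comm[OF cc(1) bb(1)] m_comm[OF cc(1) bb(2)] by auto
        then have "c \<otimes> b = c \<otimes> b'" using hb(3) by simp
        then show "b = b'" using Units_l_cancel[OF c bb(1) bb(2)] by simp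
      qed
      show "(\<lambda>b. b \<otimes> c) ` B \<subseteq> {s \<in> YY. snd (L p) \<oplus> fst (L p) \<otimes> s \<in> XX}"
      proof
        fix w assume "w \<in> (\<lambda>b. b \<otimes> c) ` B"
        then obtain b where b: "b \<in> B" "w = b \<otimes> c" by blast
        have bc: "b \<in> carrier R" using b Bc by blast
        have ga: "g a \<in> carrier R" "h a \<in> carrier R" using a gc hc by auto
        have "(g a \<otimes> inv c) \<otimes> (b \<otimes> c) = g a \<otimes> b \<otimes> (inv c \<otimes> c)"
          using ga bc cc by algebra
        also have "\<dots> = g a \<otimes> b" using c ga bc by simp
        finally have e: "(g a \<otimes> inv c) \<otimes> (b \<otimes> c) = g a \<otimes> b" .
        have "snd (L p) \<oplus> fst (L p) \<otimes> w = g a \<otimes> h a \<oplus> g a \<otimes> b"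
          unfolding L_def pp using b(2) e by simp
        also have "\<dots> = g a \<otimes> (h a \<oplus> b)" using ga bc by (simp add: r_distr)
        finally have "snd (L p) \<oplus> fst (L p) \<otimes> w \<in> XX" unfolding XX_def using a pp p b(1) A
          unfolding P_def by blast
        moreover have "w \<in> YY" unfolding YY_def using b c pp p C unfolding P_def by blast
        ultimately show "w \<in> {s \<in> YY. snd (L p) \<oplus> fst (L p) \<otimes> s \<in> XX}" by simp
      qed
    next
      have "finite YY" using fin YYc finite_subset by blast
      then show "finite {s \<in> YY. snd (L p) \<oplus> fst (L p) \<otimes> s \<in> XX}" by simp
    qed
    then show ?thesis unfolding n_def by simp
  qed
  define Rn where "Rn = real (card (carrier R))"
  define Z where "Z = real (card XX) * real (card YY)"
  define W where "W = real (card YY) * real (card M) * real (card (carrier R)) * real (card XX)"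
  have Rn0: "Rn > 0"
  proof -
    have "carrier R \<noteq> {}" using zero_closed by blast
    then show ?thesis unfolding Rn_def using fin by (simp add: card_gt_0_iff)
  qed
  have cU: "real (card U) = Rn ^ 2" unfolding U_def Rn_def by (simp add: card_cartesian_product power2_eq_square)
  have s1: "(\<Sum>l\<in>U. n l) \<ge> Rn * Z"
  proof -
    have "card (carrier R) * card XX * card YY \<le> (\<Sum>l\<in>U. card {s \<in> YY. snd l \<oplus> fst l \<otimes> s \<in> XX})"
      unfolding U_def by (rule line_sum1[OF fin XXc YYc])
    then have "real (card (carrier R) * card XX * card YY) \<le> real (\<Sum>l\<in>U. card {s \<in> YY. snd l \<oplus> fst l \<otimes> s \<in> XX})"
      by (rule of_nat_mono)
    then show ?thesis unfolding n_def Rn_def Z_def by (simp add: of_nat_sum mult.assoc)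
  qed
  have s2: "(\<Sum>l\<in>U. (n l)^2) \<le> Z^2 + W"
  proof -
    have "(\<Sum>l\<in>U. (card {s \<in> YY. snd l \<oplus> fst l \<otimes> s \<in> XX})^2) \<le> card XX ^ 2 * card YY ^ 2 + card YY * card M * card (carrier R) * card XX"
      unfolding U_def by (rule line_sum2[OF fin XXc YYc MR nu])
    then have "real (\<Sum>l\<in>U. (card {s \<in> YY. snd l \<oplus> fst l \<otimes> s \<in> XX})^2) \<le> real (card XX ^ 2 * card YY ^ 2 + card YY * card M * card (carrier R) * card XX)"
      by (rule of_nat_mono)
    then show ?thesis unfolding n_def Z_def W_def by (simp add: of_nat_sum power_mult_distrib)
  qed
  have Z0: "Z \<ge> 0" unfolding Z_def by simp
  have disj: "real (card P) * real (card B) \<le> 2 * real (card P) * (Z / Rn) \<or>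
         (real (card P) * real (card B))^2 \<le> 4 * real (card P) * real m * W"
    by (rule incidence_real[OF finP finU LU fib nb Rn0 cU Z0 s1 s2])
  have cP: "real (card P) = real (card A) * real (card C)" unfolding P_def by (simp add: card_cartesian_product)
  have W': "W = real (card M) * Rn * Z" unfolding W_def Z_def Rn_def by (simp add: algebra_simps)
  have Mn0: "real (card M) > 0"
  proof -
    have "\<zero> \<in> M" using I additive_subgroup.zero_closed ideal.axioms(1) by blast
    moreover have "finite M" using fin MR finite_subset by blast
    ultimately show ?thesis using card_gt_0_iff by (metis empty_iff of_nat_0_less_iff)
  qed
  have fa: "1/4 * min (Rn * real (card B) / real m) (real (card A) * real (card B)^2 * real (card C) / (real m^2 * (real (card M) * Rn))) \<le> Z"
    using disj m1 unfolding cP W'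
    by (intro final_arith[OF Rn0 Mn0 _ Z0]) (auto simp: mult.assoc)
  have qr: "real q ^ r = Rn" unfolding Rn_def using vs by simp
  have q2: "real q ^ (2 * r - 1) = real (card M) * Rn"
  proof -
    have "2 * r - 1 = (r - 1) + r" using vs by simp
    then have "real q ^ (2 * r - 1) = real q ^ (r - 1) * real q ^ r" by (simp add: power_add)
    then show ?thesis unfolding Rn_def using vs by simp
  qed
  show ?thesis using fa unfolding qr q2 XX_def[symmetric] YY_def[symmetric] m_def[symmetric] Z_def
    by simp
qed

end


lemma main_bound':
  fixes R :: "('a, 'b) ring_scheme"
  assumes fvr: "finite_valuation_ring R" and MM: "maximalideal M R" and z: "z \<in> carrier R"
    and Mz: "M = PIdl\<^bsub>R\<^esub> z" and q: "q = card (carrier (R Quot M))"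
    and r: "r = (LEAST n::nat. z [^]\<^bsub>R\<^esub> n = \<zero>\<^bsub>R\<^esub>)"
    and G: "subgroup G (units_of R)" and g: "\<forall>x\<in>G. g x \<in> Units R" and h: "\<forall>x\<in>G. h x \<in> Units R"
    and A: "A \<subseteq> G" and B: "B \<subseteq> Units R" and C: "C \<subseteq> Units R"
  shows "(let m = real (mu R G (\<lambda>x. g x \<otimes>\<^bsub>R\<^esub> h x));
            fAB = {g x \<otimes>\<^bsub>R\<^esub> (h x \<oplus>\<^bsub>R\<^esub> y) | x y. x \<in> A \<and> y \<in> B};
            BC = {b \<otimes>\<^bsub>R\<^esub> c' | b c'. b \<in> B \<and> c' \<in> C}
        in real (card fAB) * real (card BC) \<ge>
           1/4 * min (real q ^ r * real (card B) / m)
                     (real (card A) * real (card B) ^ 2 * real (card C) /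
                        (m ^ 2 * real q ^ (2 * r - 1))))"
proof -
  have cr: "cring R" and fin: "finite (carrier R)" and uniq: "\<exists>!M. maximalideal M R"
    using fvr unfolding finite_valuation_ring_def by auto
  show ?thesis unfolding Let_def
    by (rule cring.main_bound[OF cr fin uniq MM z Mz q r G g h A B C])
qed

theorem theorem1p10:
  shows "\<exists>c :: nat \<Rightarrow> real. (\<forall>r. c r > 0) \<and>
    (\<forall>(R :: nat ring) M z q r G g h A B C.
       finite_valuation_ring R \<longrightarrow>
       maximalideal M R \<longrightarrow>
       z \<in> carrier R \<longrightarrow> M = PIdl\<^bsub>R\<^esub> z \<longrightarrow>
       q = card (carrier (R Quot M)) \<longrightarrow>
       r = (LEAST n. z [^]\<^bsub>R\<^esub> n = \<zero>\<^bsub>R\<^esub>) \<longrightarrow>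
       subgroup G (units_of R) \<longrightarrow>
       (\<forall>x\<in>G. g x \<in> Units R) \<longrightarrow> (\<forall>x\<in>G. h x \<in> Units R) \<longrightarrow>
       A \<subseteq> G \<longrightarrow> B \<subseteq> Units R \<longrightarrow> C \<subseteq> Units R \<longrightarrow>
       (let m = real (mu R G (\<lambda>x. g x \<otimes>\<^bsub>R\<^esub> h x));
            fAB = {g x \<otimes>\<^bsub>R\<^esub> (h x \<oplus>\<^bsub>R\<^esub> y) | x y. x \<in> A \<and> y \<in> B};
            BC = {b \<otimes>\<^bsub>R\<^esub> c' | b c'. b \<in> B \<and> c' \<in> C}
        in real (card fAB) * real (card BC) \<ge>
           c r * min (real q ^ r * real (card B) / m)
                     (real (card A) * real (card B) ^ 2 * real (card C) /
                        (m ^ 2 * real q ^ (2 * r - 1)))))"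
  apply (rule exI[of _ "\<lambda>_. 1/4"])
  apply (intro conjI allI impI)
   apply simp
  apply (rule main_bound')
             apply assumption+
  done

end
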